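(* Let $H$ be a connected, simply connected real Lie group whose Lie algebra $\mathfrak h=(V,[\cdot,\cdot]_{\mathfrak h})$ is nilpotent of class at most $2$. Then the Lie algebra morphism $\psi: \mathfrak{aff}(\mathfrak h)\to\mathfrak{aff}(V)$, $\psi(x,D) = (x, D+\tfrac12\mathrm{ad}^{\mathfrak h}_x)$, is an algebraic morphism of algebraic Lie algebras.
   Context: A simply connected nilpotent Lie group $H$ has a unique structure of unipotent real linear algebraic group, $\mathrm{Aut}(H)\cong\mathrm{Aut}(\mathfrak h)$ is a linear algebraic group, and hence $\mathrm{Aff}(H)=H\rtimes\mathrm{Aut}(H)$ (and likewise $\mathrm{Aff}(V)=V\rtimes \mathrm{GL}(V)$ for $V$ abelian) is a real linear algebraic group; $\mathfrak{aff}(\mathfrak h)=\mathfrak h\rtimes\mathrm{Der}(\mathfrak h)$ and $\mathfrak{aff}(V)=V\rtimes\mathfrak{gl}(V)$ are their Lie algebras. An algebraic Lie algebra is the Lie algebra of a real linear algebraic group, and a morphism of algebraic Lie algebras is called algebraic if it is the differential of an algebraic morphism (a group morphism given by polynomial coordinate functions) of the corresponding linear algebraic groups. *)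

theory Defs
  imports "HOL-Analysis.Analysis"
begin

definition nil2_lie_bracket :: "(real^'n \<Rightarrow> real^'n \<Rightarrow> real^'n) \<Rightarrow> bool" where
  "nil2_lie_bracket br \<longleftrightarrow>
     bilinear br \<and>
     (\<forall>x. br x x = 0) \<and>
     (\<forall>x y z. br x (br y z) + br y (br z x) + br z (br x y) = 0) \<and>
     (\<forall>x y z. br (br x y) z = 0)"

text \<open>The simply connected Lie group H with Lie algebra h, realised on V in exponential
  coordinates; for class <= 2 the BCH formula gives x * y = x + y + 1/2 [x,y].\<close>
definition H_mult :: "(real^'n \<Rightarrow> real^'n \<Rightarrow> real^'n) \<Rightarrow> real^'n \<Rightarrow> real^'n \<Rightarrow> real^'n" where
  "H_mult br x y = x + y + (1/2) *\<^sub>R br x y"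

text \<open>Aut(h) = Aut(H) and Der(h), as matrices.\<close>
definition Aut_lie :: "(real^'n \<Rightarrow> real^'n \<Rightarrow> real^'n) \<Rightarrow> (real^'n^'n) set" where
  "Aut_lie br = {A. invertible A \<and> (\<forall>x y. A *v br x y = br (A *v x) (A *v y))}"

definition Der_lie :: "(real^'n \<Rightarrow> real^'n \<Rightarrow> real^'n) \<Rightarrow> (real^'n^'n) set" where
  "Der_lie br = {D. \<forall>x y. D *v br x y = br (D *v x) y + br x (D *v y)}"

definition ad_lie :: "(real^'n \<Rightarrow> real^'n \<Rightarrow> real^'n) \<Rightarrow> real^'n \<Rightarrow> real^'n^'n" where
  "ad_lie br x = matrix (br x)"

text \<open>Aff(H) = H \<rtimes> Aut(H) and Aff(V) = V \<rtimes> GL(V), as subsets of V \<times> End(V),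
  with their group laws.\<close>
definition Aff_H :: "(real^'n \<Rightarrow> real^'n \<Rightarrow> real^'n) \<Rightarrow> ((real^'n) \<times> (real^'n^'n)) set" where
  "Aff_H br = UNIV \<times> Aut_lie br"

definition Aff_H_mult :: "(real^'n \<Rightarrow> real^'n \<Rightarrow> real^'n) \<Rightarrow>
    (real^'n) \<times> (real^'n^'n) \<Rightarrow> (real^'n) \<times> (real^'n^'n) \<Rightarrow> (real^'n) \<times> (real^'n^'n)" where
  "Aff_H_mult br g h = (H_mult br (fst g) (snd g *v fst h), snd g ** snd h)"

definition Aff_V :: "((real^'n) \<times> (real^'n^'n)) set" where
  "Aff_V = UNIV \<times> {A. invertible A}"

definition Aff_V_mult :: "(real^'n) \<times> (real^'n^'n) \<Rightarrow> (real^'n) \<times> (real^'n^'n) \<Rightarrow> (real^'n) \<times> (real^'n^'n)" where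
  "Aff_V_mult g h = (fst g + snd g *v fst h, snd g ** snd h)"

inductive_set poly_fun :: "((real^'n) \<times> (real^'n^'n) \<Rightarrow> real) set" where
  const: "(\<lambda>_. c) \<in> poly_fun"
| coord_vec: "(\<lambda>g. fst g $ i) \<in> poly_fun"
| coord_mat: "(\<lambda>g. snd g $ i $ j) \<in> poly_fun"
| add: "p \<in> poly_fun \<Longrightarrow> q \<in> poly_fun \<Longrightarrow> (\<lambda>g. p g + q g) \<in> poly_fun"
| mult: "p \<in> poly_fun \<Longrightarrow> q \<in> poly_fun \<Longrightarrow> (\<lambda>g. p g * q g) \<in> poly_fun"

definition algebraic_morphism_Aff ::
  "(real^'n \<Rightarrow> real^'n \<Rightarrow> real^'n) \<Rightarrow> ((real^'n) \<times> (real^'n^'n) \<Rightarrow> (real^'n) \<times> (real^'n^'n)) \<Rightarrow> bool" where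
  "algebraic_morphism_Aff br \<Phi> \<longleftrightarrow>
     (\<forall>g \<in> Aff_H br. \<Phi> g \<in> Aff_V) \<and>
     (\<forall>g \<in> Aff_H br. \<forall>h \<in> Aff_H br. \<Phi> (Aff_H_mult br g h) = Aff_V_mult (\<Phi> g) (\<Phi> h)) \<and>
     (\<forall>i. (\<lambda>g. fst (\<Phi> g) $ i) \<in> poly_fun) \<and>
     (\<forall>i j. (\<lambda>g. snd (\<Phi> g) $ i $ j) \<in> poly_fun)"

definition aff_h :: "(real^'n \<Rightarrow> real^'n \<Rightarrow> real^'n) \<Rightarrow> ((real^'n) \<times> (real^'n^'n)) set" where
  "aff_h br = UNIV \<times> Der_lie br"

definition aff_h_bracket :: "(real^'n \<Rightarrow> real^'n \<Rightarrow> real^'n) \<Rightarrow>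
    (real^'n) \<times> (real^'n^'n) \<Rightarrow> (real^'n) \<times> (real^'n^'n) \<Rightarrow> (real^'n) \<times> (real^'n^'n)" where
  "aff_h_bracket br u v = (br (fst u) (fst v) + snd u *v fst v - snd v *v fst u,
                           snd u ** snd v - snd v ** snd u)"

definition aff_V_bracket ::
    "(real^'n) \<times> (real^'n^'n) \<Rightarrow> (real^'n) \<times> (real^'n^'n) \<Rightarrow> (real^'n) \<times> (real^'n^'n)" where
  "aff_V_bracket u v = (snd u *v fst v - snd v *v fst u, snd u ** snd v - snd v ** snd u)"

definition psi :: "(real^'n \<Rightarrow> real^'n \<Rightarrow> real^'n) \<Rightarrow> (real^'n) \<times> (real^'n^'n) \<Rightarrow> (real^'n) \<times> (real^'n^'n)" where
  "psi br u = (fst u, snd u + (1/2) *\<^sub>R ad_lie br (fst u))"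

end

theory Submission
  imports Defs
begin

lemma poly_sum:
  assumes "finite S" "\<And>k. k \<in> S \<Longrightarrow> f k \<in> poly_fun"
  shows "(\<lambda>g. \<Sum>k\<in>S. f k g) \<in> poly_fun"
  using assms
proof (induction S rule: finite_induct)
  case empty
  then show ?case using poly_fun.const[of 0] by simp
next
  case (insert a S)
  have "(\<lambda>g. \<Sum>k\<in>insert a S. f k g) = (\<lambda>g. f a g + (\<Sum>k\<in>S. f k g))"
    using insert by simp
  then show ?case using insert poly_fun.add[of "f a"] by simp
qed

lemma mm_add_r: "((A::real^'n^'n) + B) ** C = A ** C + B ** C"
  by (simp add: matrix_eq matrix_vector_mult_add_rdistrib flip: matrix_vector_mul_assoc)
lemma mm_diff_r: "((A::real^'n^'n) - B) ** C = A ** C - B ** C"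
  by (simp add: matrix_eq matrix_vector_mult_diff_rdistrib flip: matrix_vector_mul_assoc)
lemma mm_diff_l: "(C::real^'n^'n) ** (A - B) = C ** A - C ** B"
  by (simp add: matrix_eq matrix_vector_mult_diff_rdistrib matrix_vector_mult_diff_distrib flip: matrix_vector_mul_assoc)

lemma bil_mm: "bilinear (\<lambda>(A::real^'n^'n) B. A ** B)"
  unfolding bilinear_def
  by (auto intro!: linearI simp: matrix_add_ldistrib mm_add_r
      matrix_scalar_ac scalar_matrix_assoc)

context
  fixes br :: "real^'n \<Rightarrow> real^'n \<Rightarrow> real^'n"
  assumes nb: "nil2_lie_bracket br"
begin

lemma bil: "bilinear br" using nb unfolding nil2_lie_bracket_def by blast
lemma alt: "br x x = 0" using nb unfolding nil2_lie_bracket_def by blast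
lemma nil: "br (br x y) z = 0" using nb unfolding nil2_lie_bracket_def by blast

lemma rlin: "linear (br x)" using bil unfolding bilinear_def by blast
lemma llin: "linear (\<lambda>x. br x y)" using bil unfolding bilinear_def by blast

lemma anti: "br y x = - br x y"
proof -
  have "br (x+y) (x+y) = 0" by (rule alt)
  hence "br x x + br x y + br y x + br y y = 0"
    using bil by (simp add: bilinear_ladd bilinear_radd algebra_simps)
  thus ?thesis by (simp add: alt eq_neg_iff_add_eq_0 add.commute)
qed

lemma ad_v[simp]: "ad_lie br x *v v = br x v"
  unfolding ad_lie_def using matrix_vector_mul(2)[OF rlin] by metis

lemma nil2[simp]: "br x (br y z) = 0"
  using anti[of "br y z" x] nil by simp

lemma ad_ad[simp]: "ad_lie br x ** ad_lie br y = 0"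
  by (simp add: matrix_eq flip: matrix_vector_mul_assoc)

lemma ad_br[simp]: "ad_lie br (br x y) = 0"
  by (simp add: matrix_eq nil)

lemma ad_add: "ad_lie br (x + y) = ad_lie br x + ad_lie br y"
  by (simp add: matrix_eq matrix_vector_mult_add_rdistrib bilinear_ladd[OF bil])
lemma ad_diff: "ad_lie br (x - y) = ad_lie br x - ad_lie br y"
  by (simp add: matrix_eq matrix_vector_mult_diff_rdistrib bilinear_lsub[OF bil])
lemma ad_scale: "ad_lie br (c *\<^sub>R x) = c *\<^sub>R ad_lie br x"
  by (simp add: matrix_eq bilinear_lmul[OF bil] flip: scaleR_matrix_vector_assoc)
lemma ad_0[simp]: "ad_lie br 0 = 0"
  by (simp add: matrix_eq bilinear_lzero[OF bil])

lemma ad_linear: "linear (ad_lie br)"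
  by (rule linearI) (simp_all add: ad_add ad_scale)

lemma part1:
  assumes D: "D \<in> Der_lie br" and E: "E \<in> Der_lie br"
  shows "psi br (aff_h_bracket br (x,D) (y,E)) = aff_V_bracket (psi br (x,D)) (psi br (y,E))"
proof -
  have Dd: "D *v br a b = br (D *v a) b + br a (D *v b)" for a b using D unfolding Der_lie_def by blast
  have Ed: "E *v br a b = br (E *v a) b + br a (E *v b)" for a b using E unfolding Der_lie_def by blast
  have c1: "br x y + D *v y - E *v x = (D + (1/2) *\<^sub>R ad_lie br x) *v y - (E + (1/2) *\<^sub>R ad_lie br y) *v x"
    using anti[of y x]
    by (simp add: matrix_vector_mult_add_rdistrib flip: scaleR_matrix_vector_assoc)
  have c2: "D ** E - E ** D + (1/2) *\<^sub>R ad_lie br (br x y + D *v y - E *v x)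
     = (D + (1/2) *\<^sub>R ad_lie br x) ** (E + (1/2) *\<^sub>R ad_lie br y) - (E + (1/2) *\<^sub>R ad_lie br y) ** (D + (1/2) *\<^sub>R ad_lie br x)"
    unfolding matrix_eq
  proof
    fix w
    show "(D ** E - E ** D + (1/2) *\<^sub>R ad_lie br (br x y + D *v y - E *v x)) *v w =
      ((D + (1/2) *\<^sub>R ad_lie br x) ** (E + (1/2) *\<^sub>R ad_lie br y) - (E + (1/2) *\<^sub>R ad_lie br y) ** (D + (1/2) *\<^sub>R ad_lie br x)) *v w"
      by (simp add: matrix_vector_mult_add_rdistrib matrix_vector_mult_diff_rdistrib
          matrix_vector_right_distrib matrix_vector_mult_diff_distrib ad_add ad_diff Dd Ed
          bilinear_radd[OF bil] bilinear_rmul[OF bil] matrix_scaleR_vector_ac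
          flip: scaleR_matrix_vector_assoc matrix_vector_mul_assoc)
         (simp add: algebra_simps)
  qed
  show ?thesis unfolding psi_def aff_h_bracket_def aff_V_bracket_def
    using c1 c2 by simp
qed

lemma aut_ad: assumes "A \<in> Aut_lie br" shows "A ** ad_lie br y = ad_lie br (A *v y) ** A"
  using assms unfolding Aut_lie_def by (simp add: matrix_eq flip: matrix_vector_mul_assoc)

definition Phi where "Phi g = (fst g, snd g + (1/2) *\<^sub>R (ad_lie br (fst g) ** snd g))"

lemma Phi_alt: "Phi g = (fst g, (mat 1 + (1/2) *\<^sub>R ad_lie br (fst g)) ** snd g)"
  unfolding Phi_def by (simp add: mm_add_r matrix_mul_lid flip: scalar_matrix_assoc)

lemma ad_ad_s[simp]: "ad_lie br x ** (c *\<^sub>R ad_lie br y) = 0"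
  by (simp add: matrix_eq bilinear_rmul[OF bil] flip: matrix_vector_mul_assoc scaleR_matrix_vector_assoc)

lemma M_inv: "invertible (mat 1 + (1/2) *\<^sub>R ad_lie br x)"
  unfolding invertible_def
  by (rule exI[of _ "mat 1 - (1/2) *\<^sub>R ad_lie br x"])
     (simp add: matrix_add_ldistrib mm_add_r mm_diff_l mm_diff_r matrix_mul_lid matrix_mul_rid
       flip: scalar_matrix_assoc matrix_scalar_ac)

lemma Phi_hom:
  assumes A: "A \<in> Aut_lie br"
  shows "Phi (Aff_H_mult br (x,A) (y,B)) = Aff_V_mult (Phi (x,A)) (Phi (y,B))"
proof -
  have Ah: "A *v br a b = br (A *v a) (A *v b)" for a b using A unfolding Aut_lie_def by blast
  have c1: "H_mult br x (A *v y) = x + ((mat 1 + (1/2) *\<^sub>R ad_lie br x) ** A) *v y"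
    unfolding H_mult_def
    by (simp add: matrix_vector_mult_add_rdistrib flip: matrix_vector_mul_assoc scaleR_matrix_vector_assoc)
  have c2: "(mat 1 + (1/2) *\<^sub>R ad_lie br (H_mult br x (A *v y))) ** (A ** B) =
     ((mat 1 + (1/2) *\<^sub>R ad_lie br x) ** A) ** ((mat 1 + (1/2) *\<^sub>R ad_lie br y) ** B)"
    unfolding matrix_eq H_mult_def
    by (simp add: matrix_vector_mult_add_rdistrib matrix_vector_right_distrib ad_add ad_scale Ah
          bilinear_radd[OF bil] bilinear_rmul[OF bil] matrix_scaleR_vector_ac
          bilinear_ladd[OF bil] bilinear_lmul[OF bil]
          flip: scaleR_matrix_vector_assoc matrix_vector_mul_assoc)
       (simp add: algebra_simps)
  show ?thesis unfolding Phi_alt Aff_H_mult_def Aff_V_mult_def using c1 c2 by simp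
qed

lemma ad_entry: "ad_lie br x $ i $ k = (\<Sum>l\<in>UNIV. matrix (\<lambda>x. br x (axis k 1)) $ i $ l * x $ l)"
proof -
  have "ad_lie br x $ i $ k = br x (axis k 1) $ i" unfolding ad_lie_def matrix_def by simp
  also have "\<dots> = (matrix (\<lambda>x. br x (axis k 1)) *v x) $ i"
    using matrix_vector_mul(2)[OF llin[of "axis k 1"]] by metis
  finally show ?thesis by (simp add: matrix_vector_mult_def)
qed

lemma Phi_poly1: "(\<lambda>g. fst (Phi g) $ i) \<in> poly_fun"
  unfolding Phi_def by (simp add: poly_fun.coord_vec)

lemma Phi_poly2: "(\<lambda>g. snd (Phi g) $ i $ j) \<in> poly_fun"
proof -
  have e: "(\<lambda>g. snd (Phi g) $ i $ j) = (\<lambda>g. snd g $ i $ j + (\<lambda>_. 1/2) g *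
      (\<Sum>k\<in>UNIV. (\<Sum>l\<in>UNIV. (\<lambda>_. matrix (\<lambda>x. br x (axis k 1)) $ i $ l) g * fst g $ l) * snd g $ k $ j))"
    unfolding Phi_def by (simp add: matrix_matrix_mult_def ad_entry)
  show ?thesis unfolding e
    by (intro poly_fun.add poly_fun.mult poly_fun.const poly_fun.coord_mat poly_sum finite_UNIV
        poly_fun.coord_vec) simp_all
qed

lemma Phi_deriv: "(Phi has_derivative psi br) (at (0, mat 1))"
proof -
  have bl: "bounded_linear (ad_lie br)" using ad_linear linear_conv_bounded_linear by blast
  have d1: "((\<lambda>g. ad_lie br (fst g)) has_derivative (\<lambda>h. ad_lie br (fst h))) (at (0, mat 1))"
    using bounded_linear.has_derivative[OF bl has_derivative_fst[OF has_derivative_ident]] .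
  have bb: "bounded_bilinear (\<lambda>(A::real^'n^'n) B. A ** B)"
    using bil_mm bilinear_conv_bounded_bilinear by blast
  have d2: "((\<lambda>g. ad_lie br (fst g) ** snd g) has_derivative
      (\<lambda>h. ad_lie br (fst (0::real^'n, mat 1::real^'n^'n)) ** snd h + ad_lie br (fst h) ** snd (0::real^'n, mat 1::real^'n^'n))) (at (0, mat 1))"
    using bounded_bilinear.FDERIV[OF bb d1 has_derivative_snd[OF has_derivative_ident]] by simp
  have d3: "(Phi has_derivative (\<lambda>h. (fst h, snd h + (1/2) *\<^sub>R (ad_lie br (fst (0::real^'n, mat 1::real^'n^'n)) ** snd h + ad_lie br (fst h) ** snd (0::real^'n, mat 1::real^'n^'n))))) (at (0, mat 1))"
    unfolding Phi_def
    by (intro has_derivative_Pair has_derivative_add has_derivative_scaleR_right d2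
        has_derivative_fst[OF has_derivative_ident] has_derivative_snd[OF has_derivative_ident])
  have "psi br = (\<lambda>h. (fst h, snd h + (1/2) *\<^sub>R ad_lie br (fst h)))"
    by (rule ext) (simp add: psi_def)
  then show ?thesis using d3 by (simp add: matrix_mul_rid)
qed

end

theorem lemma4:
  fixes br :: "real^'n \<Rightarrow> real^'n \<Rightarrow> real^'n"
  assumes "nil2_lie_bracket br"
  shows "(\<forall>u \<in> aff_h br. \<forall>v \<in> aff_h br.
            psi br (aff_h_bracket br u v) = aff_V_bracket (psi br u) (psi br v)) \<and>
         (\<exists>\<Phi> L. algebraic_morphism_Aff br \<Phi> \<and>
            (\<Phi> has_derivative L) (at (0, mat 1)) \<and>
            (\<forall>u \<in> aff_h br. L u = psi br u))"
proof (intro conjI exI)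
  show "\<forall>u \<in> aff_h br. \<forall>v \<in> aff_h br.
            psi br (aff_h_bracket br u v) = aff_V_bracket (psi br u) (psi br v)"
    using part1[OF assms] unfolding aff_h_def by auto
  show "(Phi br has_derivative psi br) (at (0, mat 1))" using Phi_deriv[OF assms] .
  show "\<forall>u \<in> aff_h br. psi br u = psi br u" by simp
  show "algebraic_morphism_Aff br (Phi br)"
    unfolding algebraic_morphism_Aff_def
  proof (intro conjI ballI allI)
    fix g assume "g \<in> Aff_H br"
    then show "Phi br g \<in> Aff_V"
      unfolding Aff_H_def Aff_V_def Aut_lie_def
      by (auto simp: Phi_alt[OF assms] intro!: invertible_mult M_inv[OF assms])
  next
    fix g h assume "g \<in> Aff_H br" "h \<in> Aff_H br"
    then show "Phi br (Aff_H_mult br g h) = Aff_V_mult (Phi br g) (Phi br h)"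
      unfolding Aff_H_def using Phi_hom[OF assms] by (cases g, cases h) auto
  qed (use Phi_poly1[OF assms] Phi_poly2[OF assms] in auto)
qed

end
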